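(* Let $F$ be a field of characteristic $p>0$, let $S_1,\ldots,S_r\subset F$ be nonempty with $\mathrm{pdeg}(S_i)=k_i\in\mathbb N$, and for each $i$ let $\{a_{i1},\ldots,a_{ik_i}\}$ be a $p$-basis of $F^p(S_i)$. Then $$\operatorname{ann}\Omega^n_F(\mathrm{d} S_1\wedge\cdots\wedge\mathrm{d} S_r)=\operatorname{ann}\Omega^n_F(\mathrm{d}\{a_{11},\ldots,a_{1k_1}\}\wedge\cdots\wedge\mathrm{d}\{a_{r1},\ldots,a_{rk_r}\}),$$ and in particular $$\operatorname{ann}\Omega^n_F(\mathrm{d} S_1\wedge\cdots\wedge\mathrm{d} S_r)=\bigcap_{j_1=1}^{k_1}\cdots\bigcap_{j_r=1}^{k_r}\operatorname{ann}\Omega^n_F(\mathrm{d} a_{1j_1}\wedge\cdots\wedge\mathrm{d} a_{rj_r}).$$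
   Context: $F$ is a field of characteristic $p>0$. $\Omega^1(F)$ is the $F$-vector space generated by symbols $\mathrm{d} a$ ($a\in F$) with $\mathrm{d}(a+b)=\mathrm{d} a+\mathrm{d} b$, $\mathrm{d}(ab)=a\,\mathrm{d} b+b\,\mathrm{d} a$; $\Omega^n(F)=\bigwedge^n_F\Omega^1(F)$. A subset $A\subset F$ is $p$-independent if $[F^p(a_1,\ldots,a_m):F^p]=p^m$ for all finite $\{a_1,\ldots,a_m\}\subset A$; for $C\subset F$, $\mathrm{pdeg}(C)=\log_p[F^p(C):F^p]$; a $p$-basis of a field $L$ with $F^p\subseteq L\subseteq F$ is a $p$-independent $A\subset L$ with $F^p(A)=L$. For nonempty $S_1,\ldots,S_k\subset F$, $\mathrm{d} S_1\wedge\cdots\wedge\mathrm{d} S_k=\{\mathrm{d} s_1\wedge\cdots\wedge\mathrm{d} s_k\mid s_i\in S_i\}\subset\Omega^k(F)$; a single form in place of a set means the singleton. For nonempty $U\subset\Omega^k(F)$, $\operatorname{ann}\Omega^n_F(U)=\{\omega\in\Omega^n(F)\mid\omega\wedge u=0\text{ for all }u\in U\}$. *)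

theory Defs
  imports Main
begin

definition is_subfield :: "'a::field set \<Rightarrow> bool" where
  "is_subfield K \<longleftrightarrow> 0 \<in> K \<and> 1 \<in> K \<and>
     (\<forall>x\<in>K. \<forall>y\<in>K. x + y \<in> K \<and> x - y \<in> K \<and> x * y \<in> K) \<and>
     (\<forall>x\<in>K. inverse x \<in> K)"

definition gen_subfield :: "'a::field set \<Rightarrow> 'a set" where
  "gen_subfield X = \<Inter>{K. is_subfield K \<and> X \<subseteq> K}"

definition Fp :: "'a::field set" where
  "Fp = {x ^ CHAR('a) | x. True}"

definition Fp_adj :: "'a::field set \<Rightarrow> 'a set" where
  "Fp_adj C = gen_subfield (Fp \<union> C)"

definition ext_degree_is :: "'a::field set \<Rightarrow> 'a set \<Rightarrow> nat \<Rightarrow> bool" where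
  "ext_degree_is K L d \<longleftrightarrow> (\<exists>B. finite B \<and> card B = d \<and> B \<subseteq> L \<and>
      (\<forall>c. (\<forall>b\<in>B. c b \<in> K) \<longrightarrow> (\<Sum>b\<in>B. c b * b) = 0 \<longrightarrow> (\<forall>b\<in>B. c b = 0)) \<and>
      L = {(\<Sum>b\<in>B. c b * b) | c. \<forall>b\<in>B. c b \<in> K})"

definition pdeg_is :: "'a::field set \<Rightarrow> nat \<Rightarrow> bool" where
  "pdeg_is C k \<longleftrightarrow> ext_degree_is Fp (Fp_adj C) (CHAR('a) ^ k)"

definition p_independent :: "'a::field set \<Rightarrow> bool" where
  "p_independent A \<longleftrightarrow> (\<forall>A0. finite A0 \<longrightarrow> A0 \<subseteq> A \<longrightarrow>
       ext_degree_is Fp (Fp_adj A0) (CHAR('a) ^ card A0))"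

definition p_basis_of :: "'a::field set \<Rightarrow> 'a set \<Rightarrow> bool" where
  "p_basis_of L A \<longleftrightarrow> A \<subseteq> L \<and> p_independent A \<and> Fp_adj A = L"

text \<open>A formal F-linear combination of symbols  d a_1 \<and> ... \<and> d a_m  is represented by a
  finitely supported function  'a list \<Rightarrow> 'a  (coefficient of the word [a_1,...,a_m]).
  The n-forms Omega^n(F) are the quotient of the formal combinations of words of length n
  by the subspace generated by the defining relations of Omega^1 in each slot
  (additivity, Leibniz rule) and the alternating relation. We work with representatives:
  a representative is zero in Omega^n(F) iff it lies in omega_rel.\<close>

definition word :: "'a list \<Rightarrow> ('a list \<Rightarrow> 'a::field)" where
  "word w = (\<lambda>l. if l = w then 1 else 0)"

inductive_set omega_rel :: "('a list \<Rightarrow> 'a::field) set" where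
  zero: "(\<lambda>_. 0) \<in> omega_rel"
| add: "f \<in> omega_rel \<Longrightarrow> g \<in> omega_rel \<Longrightarrow> (\<lambda>l. f l + g l) \<in> omega_rel"
| smult: "f \<in> omega_rel \<Longrightarrow> (\<lambda>l. c * f l) \<in> omega_rel"
| additive: "(\<lambda>l. word (xs @ [a + b] @ ys) l - word (xs @ [a] @ ys) l
                  - word (xs @ [b] @ ys) l) \<in> omega_rel"
| leibniz: "(\<lambda>l. word (xs @ [a * b] @ ys) l - a * word (xs @ [b] @ ys) l
                  - b * word (xs @ [a] @ ys) l) \<in> omega_rel"
| alternating: "word (xs @ [a] @ ys @ [a] @ zs) \<in> omega_rel"

definition omega_n :: "nat \<Rightarrow> ('a list \<Rightarrow> 'a::field) set" where
  "omega_n n = {f. finite {l. f l \<noteq> 0} \<and> (\<forall>l. f l \<noteq> 0 \<longrightarrow> length l = n)}"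

text \<open>omega \<and> d s_1 \<and> ... \<and> d s_k  for the word s = [s_1,...,s_k].\<close>
definition wedge_word :: "('a list \<Rightarrow> 'a::field) \<Rightarrow> 'a list \<Rightarrow> ('a list \<Rightarrow> 'a)" where
  "wedge_word f s = (\<lambda>l. if length s \<le> length l \<and> drop (length l - length s) l = s
                         then f (take (length l - length s) l) else 0)"

text \<open>dS_1 \<and> ... \<and> dS_r, as the set of words [s_1,...,s_r] with s_i \<in> S_i (indices 0..r-1).\<close>
definition dwedge :: "nat \<Rightarrow> (nat \<Rightarrow> 'a set) \<Rightarrow> 'a list set" where
  "dwedge r S = {l. length l = r \<and> (\<forall>i<r. l ! i \<in> S i)}"

definition ann :: "nat \<Rightarrow> 'a::field list set \<Rightarrow> ('a list \<Rightarrow> 'a) set" where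
  "ann n U = {f \<in> omega_n n. \<forall>u\<in>U. wedge_word f u \<in> omega_rel}"

end

theory Submission
  imports Defs
begin

lemma rel_neg: "f \<in> omega_rel \<Longrightarrow> (\<lambda>l. - f l) \<in> omega_rel"
  using omega_rel.smult[of f "-1"] by simp

lemma rel_add: "f \<in> omega_rel \<Longrightarrow> g \<in> omega_rel \<Longrightarrow> (\<lambda>l. f l + g l) \<in> omega_rel"
  by (rule omega_rel.add)

lemma rel_lin3:
  assumes "f1 \<in> omega_rel" "f2 \<in> omega_rel" "f3 \<in> omega_rel"
  shows "(\<lambda>l. ca * f1 l + cb * f2 l + cc * f3 l) \<in> omega_rel"
  using assms by (intro omega_rel.add omega_rel.smult)

lemma rel_eq: "f \<in> omega_rel \<Longrightarrow> f = g \<Longrightarrow> g \<in> omega_rel" by simp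

lemma rel_sum: "finite P \<Longrightarrow> (\<And>x. x \<in> P \<Longrightarrow> G x \<in> omega_rel) \<Longrightarrow> (\<lambda>l. \<Sum>x\<in>P. G x l) \<in> omega_rel"
proof (induction P rule: finite_induct)
  case empty
  then show ?case using omega_rel.zero by simp
next
  case (insert x Q)
  then show ?case using omega_rel.add[of "G x" "\<lambda>l. \<Sum>x\<in>Q. G x l"] by simp
qed

lemma rel_sum_list: "(\<And>x. x \<in> set L \<Longrightarrow> F x \<in> omega_rel) \<Longrightarrow> (\<lambda>l. \<Sum>x\<leftarrow>L. F x l) \<in> omega_rel"
proof (induction L)
  case Nil
  then show ?case using omega_rel.zero by simp
next
  case (Cons a L)
  then show ?case using omega_rel.add[of "F a" "\<lambda>l. \<Sum>x\<leftarrow>L. F x l"] by simp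
qed

definition lc :: "('a::field \<times> 'a) list \<Rightarrow> 'a list \<Rightarrow> 'a list \<Rightarrow> 'a list \<Rightarrow> 'a" where
  "lc L xs ys = (\<lambda>l. \<Sum>(c,t)\<leftarrow>L. c * word (xs@[t]@ys) l)"

lemma lc_Nil[simp]: "lc [] xs ys l = 0" by (simp add: lc_def)
lemma lc_append[simp]: "lc (L1 @ L2) xs ys l = lc L1 xs ys l + lc L2 xs ys l"
  by (simp add: lc_def)
definition sc :: "'a::field \<Rightarrow> ('a \<times> 'a) list \<Rightarrow> ('a \<times> 'a) list" where
  "sc d L = map (\<lambda>(c,t). (d*c,t)) L"

lemma lc_scale[simp]: "lc (sc d L) xs ys l = d * lc L xs ys l"
  unfolding sc_def by (induction L) (auto simp: lc_def algebra_simps)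
lemma lc_single[simp]: "lc [(1,t)] xs ys l = word (xs@[t]@ys) l"
  by (simp add: lc_def)

definition Dp :: "'a::field set \<Rightarrow> 'a \<Rightarrow> bool" where
  "Dp T x \<longleftrightarrow> (\<exists>L. snd ` set L \<subseteq> T \<and>
      (\<forall>xs ys. (\<lambda>l. word (xs@[x]@ys) l - lc L xs ys l) \<in> omega_rel))"

lemma snd_scale: "snd ` set (sc d L) = snd ` set L"
  unfolding sc_def by (induction L) auto

lemma word_zero_rel: "word (xs@0#ys) \<in> omega_rel"
proof -
  have "(\<lambda>l. word (xs @ [0 + 0] @ ys) l - word (xs @ [0] @ ys) l - word (xs @ [0] @ ys) l) \<in> omega_rel"
    by (rule omega_rel.additive)
  from rel_neg[OF this] show ?thesis by (simp add: fun_eq_iff)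
qed

lemma word_one_rel: "word (xs@1#ys) \<in> omega_rel"
proof -
  have "(\<lambda>l. word (xs @ [1 * 1] @ ys) l - 1 * word (xs @ [1] @ ys) l - 1 * word (xs @ [1] @ ys) l) \<in> omega_rel"
    by (rule omega_rel.leibniz)
  from rel_neg[OF this] show ?thesis by (simp add: fun_eq_iff)
qed

lemma Dp_rel: "(\<And>xs ys. word (xs@x#ys) \<in> omega_rel) \<Longrightarrow> Dp T x"
  unfolding Dp_def by (rule exI[of _ "[]"]) simp

lemma Dp_base: "t \<in> T \<Longrightarrow> Dp T t"
  unfolding Dp_def using omega_rel.zero by (intro exI[of _ "[(1,t)]"]) (simp add: lc_def)

lemma Dp_add: assumes "Dp T x" "Dp T y" shows "Dp T (x + y)"
proof -
  obtain Lx where Lx: "snd ` set Lx \<subseteq> T" "\<And>xs ys. (\<lambda>l. word (xs@[x]@ys) l - lc Lx xs ys l) \<in> omega_rel"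
    using assms(1) unfolding Dp_def by blast
  obtain Ly where Ly: "snd ` set Ly \<subseteq> T" "\<And>xs ys. (\<lambda>l. word (xs@[y]@ys) l - lc Ly xs ys l) \<in> omega_rel"
    using assms(2) unfolding Dp_def by blast
  show ?thesis unfolding Dp_def
  proof (intro exI[of _ "Lx @ Ly"] conjI allI)
    show "snd ` set (Lx @ Ly) \<subseteq> T" using Lx Ly by auto
    fix xs ys
    show "(\<lambda>l. word (xs @ [x + y] @ ys) l - lc (Lx @ Ly) xs ys l) \<in> omega_rel"
      by (rule rel_eq[OF rel_lin3[where ca=1 and cb=1 and cc=1, OF omega_rel.additive[of xs x y ys] Lx(2)[of xs ys] Ly(2)[of xs ys]]])
        (simp add: fun_eq_iff algebra_simps)
  qed
qed

lemma Dp_diff: assumes "Dp T x" "Dp T y" shows "Dp T (x - y)"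
proof -
  obtain Lx where Lx: "snd ` set Lx \<subseteq> T" "\<And>xs ys. (\<lambda>l. word (xs@[x]@ys) l - lc Lx xs ys l) \<in> omega_rel"
    using assms(1) unfolding Dp_def by blast
  obtain Ly where Ly: "snd ` set Ly \<subseteq> T" "\<And>xs ys. (\<lambda>l. word (xs@[y]@ys) l - lc Ly xs ys l) \<in> omega_rel"
    using assms(2) unfolding Dp_def by blast
  show ?thesis unfolding Dp_def
  proof (intro exI[of _ "Lx @ sc ((-1)) Ly"] conjI allI)
    show "snd ` set (Lx @ sc ((-1)) Ly) \<subseteq> T" using Lx Ly by (simp add: snd_scale image_Un)
    fix xs ys
    show "(\<lambda>l. word (xs @ [x - y] @ ys) l - lc (Lx @ sc ((-1)) Ly) xs ys l) \<in> omega_rel"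
      by (rule rel_eq[OF rel_lin3[where ca="-1" and cb=1 and cc="-1", OF omega_rel.additive[of xs "x - y" y ys] Lx(2)[of xs ys] Ly(2)[of xs ys]]])
        (simp add: fun_eq_iff algebra_simps)
  qed
qed

lemma Dp_mult: assumes "Dp T x" "Dp T y" shows "Dp T (x * y)"
proof -
  obtain Lx where Lx: "snd ` set Lx \<subseteq> T" "\<And>xs ys. (\<lambda>l. word (xs@[x]@ys) l - lc Lx xs ys l) \<in> omega_rel"
    using assms(1) unfolding Dp_def by blast
  obtain Ly where Ly: "snd ` set Ly \<subseteq> T" "\<And>xs ys. (\<lambda>l. word (xs@[y]@ys) l - lc Ly xs ys l) \<in> omega_rel"
    using assms(2) unfolding Dp_def by blast
  show ?thesis unfolding Dp_def
  proof (intro exI[of _ "sc (y) Lx @ sc (x) Ly"] conjI allI)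
    show "snd ` set (sc (y) Lx @ sc (x) Ly) \<subseteq> T" using Lx Ly by (simp add: snd_scale image_Un)
    fix xs ys
    show "(\<lambda>l. word (xs @ [x * y] @ ys) l - lc (sc (y) Lx @ sc (x) Ly) xs ys l) \<in> omega_rel"
      by (rule rel_eq[OF rel_lin3[where ca=1 and cb=y and cc=x, OF omega_rel.leibniz[of xs x y ys] Lx(2)[of xs ys] Ly(2)[of xs ys]]])
        (simp add: fun_eq_iff algebra_simps)
  qed
qed

lemma Dp_inverse: assumes "Dp T x" shows "Dp T (inverse x)"
proof (cases "x = 0")
  case True
  then show ?thesis using Dp_rel[OF word_zero_rel] by simp
next
  case False
  obtain Lx where Lx: "snd ` set Lx \<subseteq> T" "\<And>xs ys. (\<lambda>l. word (xs@[x]@ys) l - lc Lx xs ys l) \<in> omega_rel"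
    using assms(1) unfolding Dp_def by blast
  show ?thesis unfolding Dp_def
  proof (intro exI[of _ "sc (uminus (inverse x ^ 2)) Lx"] conjI allI)
    show "snd ` set (sc (uminus (inverse x ^ 2)) Lx) \<subseteq> T" using Lx by (simp add: snd_scale)
    fix xs ys
    have l: "(\<lambda>l. word (xs @ [x * inverse x] @ ys) l - x * word (xs @ [inverse x] @ ys) l
                  - inverse x * word (xs @ [x] @ ys) l) \<in> omega_rel"
      by (rule omega_rel.leibniz)
    show "(\<lambda>l. word (xs @ [inverse x] @ ys) l - lc (sc (uminus (inverse x ^ 2)) Lx) xs ys l) \<in> omega_rel"
      by (rule rel_eq[OF rel_lin3[where ca="- inverse x" and cb="inverse x" and cc="uminus (inverse x ^ 2)", OF l word_one_rel[of xs ys] Lx(2)[of xs ys]]])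
        (use False in \<open>simp add: fun_eq_iff algebra_simps power2_eq_square\<close>)
  qed
qed

lemma word_pow: "(\<lambda>l. word (xs@[x ^ Suc n]@ys) l - (of_nat (Suc n) * x ^ n) * word (xs@[x]@ys) l) \<in> omega_rel"
proof (induction n)
  case 0
  then show ?case using omega_rel.zero by simp
next
  case (Suc n)
  have l: "(\<lambda>l. word (xs @ [x * x ^ Suc n] @ ys) l - x * word (xs @ [x ^ Suc n] @ ys) l
                  - x ^ Suc n * word (xs @ [x] @ ys) l) \<in> omega_rel"
    by (rule omega_rel.leibniz)
  show ?case
    by (rule rel_eq[OF rel_lin3[where ca=1 and cb=x and cc=0, OF l Suc omega_rel.zero]])
      (simp add: fun_eq_iff algebra_simps)
qed

lemma Dp_Fp: assumes "z \<in> (Fp :: 'a::field set)" shows "Dp T z"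
proof -
  obtain x where z: "z = x ^ CHAR('a)" using assms unfolding Fp_def by blast
  show ?thesis
  proof (cases "CHAR('a)")
    case 0
    then show ?thesis using z Dp_rel[OF word_one_rel] by simp
  next
    case (Suc m)
    have "of_nat (Suc m) = (0::'a)" using of_nat_CHAR[where 'a='a] Suc by simp
    then show ?thesis using z Suc word_pow[of _ x m] by (intro Dp_rel) simp
  qed
qed

lemma Fp_adj_Dp: "Fp_adj T \<subseteq> {x. Dp T x}"
proof -
  have "is_subfield {x. Dp T x}"
    unfolding is_subfield_def
  proof (intro conjI ballI)
    show "0 \<in> {x. Dp T x}" using Dp_rel[OF word_zero_rel] by simp
    show "1 \<in> {x. Dp T x}" using Dp_rel[OF word_one_rel] by simp
    fix x y assume x: "x \<in> {x. Dp T x}" and y: "y \<in> {x. Dp T x}"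
    show "x + y \<in> {x. Dp T x}" using Dp_add x y by simp
    show "x - y \<in> {x. Dp T x}" using Dp_diff x y by simp
    show "x * y \<in> {x. Dp T x}" using Dp_mult x y by simp
  next
    fix x assume x: "x \<in> {x. Dp T x}"
    show "inverse x \<in> {x. Dp T x}" using Dp_inverse x by simp
  qed
  moreover have "Fp \<union> T \<subseteq> {x. Dp T x}" using Dp_Fp Dp_base by blast
  ultimately show ?thesis unfolding Fp_adj_def gen_subfield_def by blast
qed

lemma wedge_sum:
  assumes "finite P" "{l. f l \<noteq> 0} \<subseteq> P"
  shows "wedge_word f s l = (\<Sum>l0\<in>P. f l0 * word (l0 @ s) l)"
proof (cases "length s \<le> length l \<and> drop (length l - length s) l = s")
  case True
  let ?t = "take (length l - length s) l"
  have w: "word (l0 @ s) l = (if l0 = ?t then 1 else 0)" for l0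
  proof -
    have "l = ?t @ s" using True by (metis append_take_drop_id)
    then have "(l0 @ s = l) = (l0 = ?t)" by (metis append_same_eq)
    then show ?thesis unfolding word_def by auto
  qed
  have "(\<Sum>l0\<in>P. f l0 * word (l0 @ s) l) = (\<Sum>l0\<in>P. if l0 = ?t then f l0 else 0)"
    by (rule sum.cong) (auto simp: w)
  also have "\<dots> = (if ?t \<in> P then f ?t else 0)" using assms(1) by (simp add: sum.delta')
  also have "\<dots> = f ?t" using assms(2) by auto
  finally have "(\<Sum>l0\<in>P. f l0 * word (l0 @ s) l) = f ?t" .
  moreover have "wedge_word f s l = f ?t" unfolding wedge_word_def by (rule if_P[OF True])
  ultimately show ?thesis by simp
next
  case False
  have w: "word (l0 @ s) l = 0" for l0
    using False unfolding word_def by auto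
  have "wedge_word f s l = 0" unfolding wedge_word_def by (rule if_not_P[OF False])
  then show ?thesis by (simp add: w)
qed

lemma wedge_step:
  assumes f: "f \<in> omega_n n"
    and L: "\<And>xs ys. (\<lambda>l. word (xs@[x]@ys) l - lc L xs ys l) \<in> omega_rel"
  shows "(\<lambda>l. wedge_word f (xs@[x]@ys) l - (\<Sum>(c,t)\<leftarrow>L. c * wedge_word f (xs@[t]@ys) l)) \<in> omega_rel"
proof -
  define P where "P = {l. f l \<noteq> 0}"
  have fin: "finite P" using f unfolding P_def omega_n_def by simp
  have ws: "\<And>s l. wedge_word f s l = (\<Sum>l0\<in>P. f l0 * word (l0 @ s) l)"
    by (rule wedge_sum[OF fin]) (simp add: P_def)
  have swap: "(\<Sum>(c,t)\<leftarrow>L. c * (\<Sum>l0\<in>P. f l0 * word (l0 @ xs @ t # ys) l))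
       = (\<Sum>l0\<in>P. f l0 * lc L (l0 @ xs) ys l)" for l
    by (induction L) (auto simp: lc_def sum_distrib_left sum.distrib algebra_simps)
  have r: "(\<lambda>l. \<Sum>l0\<in>P. f l0 * (word ((l0@xs)@[x]@ys) l - lc L (l0@xs) ys l)) \<in> omega_rel"
    by (rule rel_sum[OF fin, where G="\<lambda>l0 l. f l0 * (word ((l0@xs)@[x]@ys) l - lc L (l0@xs) ys l)"])
      (rule omega_rel.smult[OF L])
  show ?thesis
    by (rule rel_eq[OF r]) (simp add: fun_eq_iff ws swap sum_subtractf right_diff_distrib)
qed

lemma ann_mono:
  assumes "\<forall>i<r. T i \<subseteq> Fp_adj (U i)"
  shows "ann n (dwedge r U) \<subseteq> ann n (dwedge r T)"
proof
  fix f assume "f \<in> ann n (dwedge r U)"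
  hence f: "f \<in> omega_n n" and hU: "\<And>u. u \<in> dwedge r U \<Longrightarrow> wedge_word f u \<in> omega_rel"
    by (auto simp: ann_def)
  have main: "m \<le> r \<Longrightarrow> length w = r \<Longrightarrow> (\<forall>i<m. w!i \<in> T i) \<Longrightarrow> (\<forall>i. m \<le> i \<and> i < r \<longrightarrow> w!i \<in> U i)
      \<Longrightarrow> wedge_word f w \<in> omega_rel" for m w
  proof (induction m arbitrary: w)
    case 0
    then show ?case using hU by (auto simp: dwedge_def)
  next
    case (Suc m)
    have mr: "m < length w" using Suc by simp
    have "w!m \<in> T m" using Suc.prems by simp
    hence "Dp (U m) (w!m)" using assms Fp_adj_Dp mr Suc.prems(2) by blast
    then obtain L where L1: "snd ` set L \<subseteq> U m"
      and L2: "\<And>xs ys. (\<lambda>l. word (xs@[w!m]@ys) l - lc L xs ys l) \<in> omega_rel"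
      unfolding Dp_def by blast
    define xs where "xs = take m w"
    define ys where "ys = drop (Suc m) w"
    have weq: "w = xs @ [w!m] @ ys" using id_take_nth_drop[OF mr] xs_def ys_def by simp
    have upd: "\<And>t. xs @ [t] @ ys = w[m := t]" using upd_conv_take_nth_drop[OF mr] by (simp add: xs_def ys_def)
    have step: "(\<lambda>l. wedge_word f (xs@[w!m]@ys) l - (\<Sum>(c,t)\<leftarrow>L. c * wedge_word f (xs@[t]@ys) l)) \<in> omega_rel"
      by (rule wedge_step[OF f L2])
    have each: "(\<lambda>l. case p of (c,t) \<Rightarrow> c * wedge_word f (xs@[t]@ys) l) \<in> omega_rel" if p: "p \<in> set L" for p
    proof -
      obtain c t where pct: "p = (c,t)" by (cases p)
      have "t \<in> U m" using L1 p pct by force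
      have "wedge_word f (w[m:=t]) \<in> omega_rel"
        by (rule Suc.IH) (use Suc.prems \<open>t \<in> U m\<close> in \<open>auto simp: nth_list_update\<close>)
      then show ?thesis using omega_rel.smult[of _ c] upd pct by simp
    qed
    have sumrel: "(\<lambda>l. \<Sum>(c,t)\<leftarrow>L. c * wedge_word f (xs@[t]@ys) l) \<in> omega_rel"
      using rel_sum_list[of L "\<lambda>p l. case p of (c,t) \<Rightarrow> c * wedge_word f (xs@[t]@ys) l", OF each]
      by simp
    have "(\<lambda>l. (wedge_word f (xs@[w!m]@ys) l - (\<Sum>(c,t)\<leftarrow>L. c * wedge_word f (xs@[t]@ys) l))
           + (\<Sum>(c,t)\<leftarrow>L. c * wedge_word f (xs@[t]@ys) l)) \<in> omega_rel"
      by (rule omega_rel.add[OF step sumrel])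
    then have "wedge_word f (xs@[w!m]@ys) \<in> omega_rel" by (simp add: fun_eq_iff)
    then show ?case using weq by metis
  qed
  have "wedge_word f u \<in> omega_rel" if "u \<in> dwedge r T" for u
    using that by (intro main[of r]) (auto simp: dwedge_def)
  then show "f \<in> ann n (dwedge r T)" using f by (auto simp: ann_def)
qed

lemma subset_Fp_adj: "X \<subseteq> Fp_adj X"
  unfolding Fp_adj_def gen_subfield_def by blast

theorem corollary3p3:
  fixes S :: "nat \<Rightarrow> 'a::field set" and k :: "nat \<Rightarrow> nat"
    and a :: "nat \<Rightarrow> nat \<Rightarrow> 'a" and r n :: nat
  assumes "CHAR('a) > 0"
    and "\<forall>i<r. S i \<noteq> {}"
    and "\<forall>i<r. pdeg_is (S i) (k i)"
    and "\<forall>i<r. p_basis_of (Fp_adj (S i)) {a i j | j. j < k i}"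
  shows "ann n (dwedge r S) = ann n (dwedge r (\<lambda>i. {a i j | j. j < k i}))
       \<and> ann n (dwedge r S) =
           {f \<in> omega_n n. \<forall>J. (\<forall>i<r. J i < k i) \<longrightarrow>
                f \<in> ann n {map (\<lambda>i. a i (J i)) [0..<r]}}"
proof -
  define A where "A = (\<lambda>i. {a i j | j. j < k i})"
  have s1: "\<forall>i<r. A i \<subseteq> Fp_adj (S i)" using assms(4) unfolding A_def p_basis_of_def by blast
  have s2: "\<forall>i<r. S i \<subseteq> Fp_adj (A i)"
  proof (intro allI impI)
    fix i assume "i < r"
    then have "Fp_adj (A i) = Fp_adj (S i)" using assms(4) unfolding A_def p_basis_of_def by blast
    then show "S i \<subseteq> Fp_adj (A i)" using subset_Fp_adj[of "S i"] by simp
  qed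
  have eq1: "ann n (dwedge r S) = ann n (dwedge r A)"
    using ann_mono[OF s1] ann_mono[OF s2] by blast
  have eq2: "ann n (dwedge r A) = {f \<in> omega_n n. \<forall>J. (\<forall>i<r. J i < k i) \<longrightarrow>
                f \<in> ann n {map (\<lambda>i. a i (J i)) [0..<r]}}"
  proof (intro set_eqI iffI)
    fix f assume f: "f \<in> ann n (dwedge r A)"
    have "f \<in> ann n {map (\<lambda>i. a i (J i)) [0..<r]}" if J: "\<forall>i<r. J i < k i" for J
    proof -
      have "map (\<lambda>i. a i (J i)) [0..<r] \<in> dwedge r A" using J unfolding dwedge_def A_def by auto
      then show ?thesis using f unfolding ann_def by auto
    qed
    then show "f \<in> {f \<in> omega_n n. \<forall>J. (\<forall>i<r. J i < k i) \<longrightarrow> f \<in> ann n {map (\<lambda>i. a i (J i)) [0..<r]}}"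
      using f unfolding ann_def by auto
  next
    fix f assume f: "f \<in> {f \<in> omega_n n. \<forall>J. (\<forall>i<r. J i < k i) \<longrightarrow> f \<in> ann n {map (\<lambda>i. a i (J i)) [0..<r]}}"
    have "wedge_word f u \<in> omega_rel" if u: "u \<in> dwedge r A" for u
    proof -
      have "\<forall>i. \<exists>j. i < r \<longrightarrow> j < k i \<and> u!i = a i j" using u unfolding dwedge_def A_def by blast
      then have "\<exists>J. \<forall>i. i < r \<longrightarrow> J i < k i \<and> u!i = a i (J i)" by (rule choice)
      then obtain J where J: "\<forall>i. i < r \<longrightarrow> J i < k i \<and> u!i = a i (J i)" by blast
      have "map (\<lambda>i. a i (J i)) [0..<r] = u" using u J unfolding dwedge_def
        by (intro nth_equalityI) auto
      then show ?thesis using f J unfolding ann_def by auto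
    qed
    then show "f \<in> ann n (dwedge r A)" using f unfolding ann_def by auto
  qed
  show ?thesis using eq1 eq2 unfolding A_def by simp
qed

end
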